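(* Let $q\ge 2$ be a prime power, $m\ge 1$, $n=q^m-1$, and suppose $n=r_1r_2$ with integers $r_1,r_2>1$ and $\gcd(r_1,r_2)=1$. Let $a$ be the multiplicative order of $q$ modulo $r_1$; then $a\mid m$. Fix a generator $\alpha$ of the multiplicative group $\mathbb{F}_{q^m}^*$ and a group isomorphism $T:\mathbb{Z}_n\to\mathbb{Z}_{r_1}\times\mathbb{Z}_{r_2}$. Let $$\Gamma=\left\{(i_1,i_2)\in\mathbb{Z}_{r_1}\times\mathbb{Z}_{r_2}\ \middle|\ 0\le i_1<a,\ 0\le i_2<\frac{m}{a}\right\}.$$ Then $T^{-1}(\Gamma)\subseteq\mathbb{Z}_n$ is a set of check positions for the punctured code $R^*_q(m(q-1)-2,m)$; that is, the set of coordinates $\{\alpha^i\mid i\in T^{-1}(\Gamma)\}$ is a set of check positions of $R^*_q(m(q-1)-2,m)$.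
   Context: $\mathbb{F}=\mathbb{F}_q$. Elements of $\mathbb{Z}_r$ are identified with the integers $0,\dots,r-1$. For a natural number $k$ with $q$-ary expansion $k=\sum_{r\ge0}k_rq^r$, $k_r\in\{0,\dots,q-1\}$, its $q$-weight is $\mathrm{wt}_q(k)=\sum_r k_r$. Let $G$ be the additive group of $\mathbb{F}_{q^m}$; a word of length $q^m$ is a vector $(c_g)_{g\in G}\in\mathbb{F}^G$, written $bX^0+\sum_{i=0}^{n-1}a_iX^{\alpha^i}$ (coordinate $0$ has entry $b$, coordinate $\alpha^i$ has entry $a_i$). For $0<\rho\le m(q-1)$, the generalized Reed–Muller code $R_q(\rho,m)$ is the set of words $bX^0+\sum_i a_iX^{\alpha^i}$ such that $b\cdot 0^s+\sum_{i=0}^{n-1}a_i\alpha^{is}=0$ for every integer $s$ with $0\le s<q^m-1$ and $\mathrm{wt}_q(s)<m(q-1)-\rho$ (convention $0^0=1$). The punctured code $R^*_q(\rho,m)$ is obtained from $R_q(\rho,m)$ by deleting the coordinate $X^0$; its coordinates are $\alpha^0,\dots,\alpha^{n-1}$, indexed by $i\in\mathbb{Z}_n$. For a linear code $C$ of dimension $k$ with coordinate set $P$, an information set is $I\subseteq P$ with $|I|=k$ such that the projection of $C$ onto the coordinates in $I$ is all of $\mathbb{F}^{k}$; a set of check positions is the complement $P\setminus I$ of an information set. *)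

theory Defs
  imports "HOL-Number_Theory.Number_Theory" "HOL-Library.FuncSet"
begin

text \<open>q-ary weight: sum of the base-q digits of k (digits at positions r > k vanish for q >= 2).\<close>
definition qweight :: "nat \<Rightarrow> nat \<Rightarrow> nat" where
  "qweight q k = (\<Sum>r\<le>k. (k div q ^ r) mod q)"

definition is_subfield :: "'k::field set \<Rightarrow> bool" where
  "is_subfield F \<longleftrightarrow> 0 \<in> F \<and> 1 \<in> F \<and>
     (\<forall>x\<in>F. \<forall>y\<in>F. x + y \<in> F \<and> x * y \<in> F) \<and>
     (\<forall>x\<in>F. - x \<in> F) \<and> (\<forall>x\<in>F. x \<noteq> 0 \<longrightarrow> inverse x \<in> F)"

text \<open>Generalized Reed-Muller code R_q(rho,m) over F (subfield of size q of 'k, |'k| = q^m),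
  with respect to the primitive element alpha. A word is a pair (b, a): b is the entry at
  coordinate X^0, a i the entry at coordinate alpha^i, for i < n = q^m - 1.\<close>
definition GRM :: "'k::field set \<Rightarrow> nat \<Rightarrow> nat \<Rightarrow> nat \<Rightarrow> 'k \<Rightarrow> ('k \<times> (nat \<Rightarrow> 'k)) set" where
  "GRM F q m \<rho> \<alpha> = {(b, a). b \<in> F \<and> a \<in> {0..<q^m - 1} \<rightarrow>\<^sub>E F \<and>
      (\<forall>s. s < q^m - 1 \<and> qweight q s < m * (q - 1) - \<rho> \<longrightarrow>
         b * 0 ^ s + (\<Sum>i<q^m - 1. a i * \<alpha> ^ (i * s)) = 0)}"

definition GRM_punct :: "'k::field set \<Rightarrow> nat \<Rightarrow> nat \<Rightarrow> nat \<Rightarrow> 'k \<Rightarrow> (nat \<Rightarrow> 'k) set" where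
  "GRM_punct F q m \<rho> \<alpha> = {a. \<exists>b. (b, a) \<in> GRM F q m \<rho> \<alpha>}"

definition code_dim :: "'k set \<Rightarrow> ('i \<Rightarrow> 'k) set \<Rightarrow> nat" where
  "code_dim F C = (THE k. card C = card F ^ k)"

definition information_set :: "'k set \<Rightarrow> 'i set \<Rightarrow> ('i \<Rightarrow> 'k) set \<Rightarrow> 'i set \<Rightarrow> bool" where
  "information_set F P C I \<longleftrightarrow> I \<subseteq> P \<and> card I = code_dim F C \<and>
     (\<lambda>w. restrict w I) ` C = (I \<rightarrow>\<^sub>E F)"

definition check_positions :: "'k set \<Rightarrow> 'i set \<Rightarrow> ('i \<Rightarrow> 'k) set \<Rightarrow> 'i set \<Rightarrow> bool" where
  "check_positions F P C J \<longleftrightarrow> J \<subseteq> P \<and> information_set F P C (P - J)"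

end

theory Submission
  imports Defs "HOL-Computational_Algebra.Computational_Algebra"
begin

lemma pow_card_closed:
  fixes S :: "'k::field set"
  assumes fin: "finite S" and z: "0 \<in> S" and cl: "\<forall>x\<in>S. \<forall>y\<in>S. x * y \<in> S" and x: "x \<in> S"
  shows "x ^ card S = x"
proof (cases "x = 0")
  case True
  have "card S > 0" using fin z by (auto simp: card_gt_0_iff)
  then show ?thesis using True by simp
next
  case False
  let ?A = "S - {0}"
  have inj: "inj_on (\<lambda>y. x * y) ?A" using False by (auto simp: inj_on_def)
  have sub: "(\<lambda>y. x * y) ` ?A \<subseteq> ?A" using cl x False by auto
  have img: "(\<lambda>y. x * y) ` ?A = ?A"
    using endo_inj_surj[OF _ sub inj] fin by auto
  have "(\<Prod>y\<in>?A. y) = (\<Prod>y\<in>(\<lambda>y. x * y) ` ?A. y)" using img by simp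
  also have "\<dots> = (\<Prod>y\<in>?A. x * y)" using prod.reindex[OF inj] by simp
  also have "\<dots> = x ^ card ?A * (\<Prod>y\<in>?A. y)" by (simp add: prod.distrib)
  finally have "x ^ card ?A = 1"
    using fin by (simp add: prod_zero_iff)
  moreover have "card S = Suc (card ?A)" using fin z
    by (metis card_Suc_Diff1)
  ultimately show ?thesis by simp
qed

lemma card_of_nat_zero:
  "of_nat (card (UNIV :: 'k::{finite,field} set)) = (0::'k)"
proof -
  have bij: "bij_betw (\<lambda>x::'k. x + 1) UNIV UNIV"
    by (rule bij_betwI[of _ _ _ "\<lambda>y. y - 1"]) auto
  have "(\<Sum>x\<in>(UNIV::'k set). x) = (\<Sum>x\<in>UNIV. x + 1)"
    using sum.reindex_bij_betw[OF bij, of "\<lambda>x. x"] by simp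
  also have "\<dots> = (\<Sum>x\<in>(UNIV::'k set). x) + of_nat (card (UNIV::'k set))"
    by (simp add: sum.distrib)
  finally show ?thesis by simp
qed

lemma char_facts:
  assumes "prime p" "card (UNIV :: 'k::{finite,field} set) = p ^ N" "N > 0"
  shows "CHAR('k) = p"
proof -
  have pos: "CHAR('k) > 0" using finite_imp_CHAR_pos[where 'a='k] by simp
  have pr: "prime CHAR('k)" using prime_CHAR_semidom[OF pos] .
  have "CHAR('k) dvd p ^ N" using card_of_nat_zero[where 'k='k] assms(2)
    by (metis of_nat_eq_0_iff_char_dvd)
  then have "CHAR('k) dvd p" using pr prime_dvd_power by blast
  then show ?thesis using pr assms(1) by (simp add: primes_dvd_imp_eq)
qed

lemma indep_poly:
  fixes y :: "'k::field" and c :: "nat \<Rightarrow> 'k"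
  assumes frob: "\<And>(f::nat \<Rightarrow> 'k) A. (sum f A) ^ Q = sum (\<lambda>i. f i ^ Q) A"
    and cfix: "\<And>i. i < d \<Longrightarrow> c i ^ Q = c i"
    and inj: "inj_on (\<lambda>k. y ^ (Q ^ k)) {..<d}"
    and eq: "(\<Sum>i<d. c i * y ^ i) = 0"
  shows "\<forall>i<d. c i = 0"
proof -
  define p where "p = (\<Sum>i<d. monom (c i) i)"
  have poly_p: "poly p x = (\<Sum>i<d. c i * x ^ i)" for x
    unfolding p_def by (simp add: poly_sum poly_monom)
  have coeff_p: "coeff p j = (if j < d then c j else 0)" for j
    unfolding p_def by (simp add: coeff_sum coeff_monom)
  have frobk: "(sum f A) ^ (Q ^ k) = sum (\<lambda>i. f i ^ (Q ^ k)) A" for k and f :: "nat \<Rightarrow> 'k" and A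
  proof (induction k arbitrary: f)
    case 0 then show ?case by simp
  next
    case (Suc k)
    have "(sum f A) ^ (Q ^ Suc k) = ((sum f A) ^ (Q ^ k)) ^ Q"
      by (simp add: power_mult[symmetric] mult.commute)
    also have "\<dots> = (\<Sum>i\<in>A. (f i ^ (Q ^ k)) ^ Q)" using Suc frob by simp
    also have "\<dots> = sum (\<lambda>i. f i ^ (Q ^ Suc k)) A"
      by (simp add: power_mult[symmetric] mult.commute)
    finally show ?case .
  qed
  have cfixk: "c i ^ (Q ^ k) = c i" if "i < d" for i k
  proof (induction k)
    case 0 then show ?case by simp
  next
    case (Suc k)
    have "c i ^ (Q ^ Suc k) = (c i ^ (Q ^ k)) ^ Q"
      by (simp add: power_mult[symmetric] mult.commute)
    then show ?case using Suc cfix[OF that] by simp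
  qed
  have roots: "poly p (y ^ (Q ^ k)) = 0" if "k < d" for k
  proof -
    have "(0::'k) ^ Q = 0" using frob[of _ "{}"] by simp
    then have "Q > 0" by (cases Q) auto
    have "0 = (\<Sum>i<d. c i * y ^ i) ^ (Q ^ k)" using eq \<open>Q > 0\<close> by (simp add: zero_power)
    also have "\<dots> = (\<Sum>i<d. (c i * y ^ i) ^ (Q ^ k))" by (rule frobk)
    also have "\<dots> = (\<Sum>i<d. c i * (y ^ (Q ^ k)) ^ i)"
      by (intro sum.cong refl) (simp add: power_mult_distrib cfixk power_mult[symmetric] mult.commute)
    finally show ?thesis using poly_p by simp
  qed
  have "p = 0"
  proof (rule ccontr)
    assume nz: "p \<noteq> 0"
    have "(\<lambda>k. y ^ (Q ^ k)) ` {..<d} \<subseteq> {x. poly p x = 0}" using roots by auto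
    then have "card ((\<lambda>k. y ^ (Q ^ k)) ` {..<d}) \<le> card {x. poly p x = 0}"
      by (intro card_mono poly_roots_finite nz)
    also have "\<dots> \<le> degree p" by (rule card_poly_roots_bound[OF nz])
    finally have "d \<le> degree p" using card_image[OF inj] by simp
    moreover have "coeff p (degree p) = 0" using coeff_p \<open>d \<le> degree p\<close> by simp
    ultimately show False using nz by simp
  qed
  then show ?thesis using coeff_p by (metis coeff_0)
qed


lemma qweight_ext:
  assumes q: "q \<ge> 2" and N: "N \<ge> t"
  shows "(\<Sum>r\<le>N. (t div q ^ r) mod q) = qweight q t"
  unfolding qweight_def
proof (rule sum.mono_neutral_right)
  show "finite {..N}" by simp
  show "{..t} \<subseteq> {..N}" using N by auto
  show "\<forall>i\<in>{..N} - {..t}. t div q ^ i mod q = 0"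
  proof
    fix i assume "i \<in> {..N} - {..t}"
    then have "i > t" by auto
    have "t < 2 ^ t" by (rule less_exp)
    also have "2 ^ t \<le> q ^ t" using q by (simp add: power_mono)
    also have "q ^ t \<le> q ^ i" using q \<open>i > t\<close> by (intro power_increasing) auto
    finally show "t div q ^ i mod q = 0" by simp
  qed
qed

lemma qweight_rec:
  assumes q: "q \<ge> 2"
  shows "qweight q s = s mod q + qweight q (s div q)"
proof (cases s)
  case 0 then show ?thesis by (simp add: qweight_def)
next
  case (Suc k)
  have "qweight q s = (\<Sum>r\<le>Suc k. (s div q ^ r) mod q)" using Suc by (simp add: qweight_def)
  also have "\<dots> = s mod q + (\<Sum>r\<le>k. (s div q ^ Suc r) mod q)"
    by (subst sum.atMost_Suc_shift) simp
  also have "(\<Sum>r\<le>k. (s div q ^ Suc r) mod q) = (\<Sum>r\<le>k. (s div q div q ^ r) mod q)"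
    by (simp add: div_mult2_eq)
  also have "\<dots> = qweight q (s div q)"
  proof (rule qweight_ext[OF q])
    have "s div q \<le> s div 2" using q by (simp add: div_le_mono2)
    then show "s div q \<le> k" using Suc by linarith
  qed
  finally show ?thesis .
qed

lemma qweight_pos:
  assumes q: "q \<ge> 2" shows "s > 0 \<Longrightarrow> qweight q s \<ge> 1"
proof (induction s rule: less_induct)
  case (less s)
  show ?case
  proof (cases "s mod q = 0")
    case True
    then have "s div q > 0" "s div q < s" using less.prems q
      by (auto simp: div_greater_zero_iff)
    then have "qweight q (s div q) \<ge> 1" using less.IH by blast
    then show ?thesis using qweight_rec[OF q, of s] by simp
  next
    case False
    then show ?thesis using qweight_rec[OF q, of s] by simp
  qed
qed

lemma qweight_one:
  assumes q: "q \<ge> 2" shows "s > 0 \<Longrightarrow> qweight q s \<le> 1 \<Longrightarrow> \<exists>j. s = q ^ j"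
proof (induction s rule: less_induct)
  case (less s)
  show ?case
  proof (cases "s mod q = 0")
    case True
    then have "s div q > 0" "s div q < s" using less.prems q
      by (auto simp: div_greater_zero_iff)
    moreover have "qweight q (s div q) \<le> 1" using qweight_rec[OF q, of s] less.prems True by simp
    ultimately obtain j where "s div q = q ^ j" using less.IH by blast
    moreover have "s = q * (s div q) + s mod q" by simp
    ultimately have "s = q ^ Suc j" using True by simp
    then show ?thesis by blast
  next
    case False
    then have "qweight q (s div q) = 0" using qweight_rec[OF q, of s] less.prems by simp
    then have "s div q = 0" using qweight_pos[OF q, of "s div q"] by (cases "s div q = 0") auto
    moreover have "s mod q = 1" using False qweight_rec[OF q, of s] less.prems by simp
    moreover have "s = q * (s div q) + s mod q" by simp
    ultimately have "s = q ^ 0" by simp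
    then show ?thesis by blast
  qed
qed

lemma subfield_sum:
  assumes "is_subfield F" "\<And>i. i \<in> A \<Longrightarrow> f i \<in> F"
  shows "sum f A \<in> F"
  using assms(2)
proof (induction A rule: infinite_finite_induct)
  case (infinite A) then show ?case using assms(1) by (simp add: is_subfield_def)
next
  case empty then show ?case using assms(1) by (simp add: is_subfield_def)
next
  case (insert x A) then show ?case using assms(1) by (simp add: is_subfield_def)
qed

lemma subfield_diff:
  assumes "is_subfield F" "x \<in> F" "y \<in> F" shows "x - y \<in> F"
  using assms unfolding is_subfield_def by (metis diff_conv_add_uminus)

lemma subfield_pow_q:
  fixes F :: "'k::{finite,field} set"
  assumes "is_subfield F" "card F = q" "x \<in> F"
  shows "x ^ (q ^ j) = x"
proof (induction j)
  case 0 then show ?case by simp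
next
  case (Suc j)
  have xq: "x ^ q = x" using pow_card_closed[of F x] assms unfolding is_subfield_def by auto
  have "x ^ (q ^ Suc j) = (x ^ q) ^ (q ^ j)" by (simp add: power_mult[symmetric] mult.commute)
  then show ?case using xq Suc by simp
qed

lemma code_char:
  fixes F :: "'k::{finite,field} set" and \<alpha> :: 'k
  assumes F_sub: "is_subfield F" and card_F: "card F = q"
    and q2: "q \<ge> 2" and qchar: "q = CHAR('k) ^ e" and pr: "prime CHAR('k)"
    and mq: "m * (q - 1) \<ge> 2" and n_def: "n = q ^ m - 1" and n2: "n \<ge> 2"
  shows "GRM_punct F q m (m * (q - 1) - 2) \<alpha> = {a \<in> {0..<n} \<rightarrow>\<^sub>E F. (\<Sum>i<n. a i * \<alpha> ^ i) = 0}"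
proof -
  have diff2: "m * (q - 1) - (m * (q - 1) - 2) = 2" using mq by simp
  show ?thesis
  proof (intro equalityI subsetI)
    fix a assume "a \<in> GRM_punct F q m (m * (q - 1) - 2) \<alpha>"
    then obtain b where b: "(b, a) \<in> GRM F q m (m * (q - 1) - 2) \<alpha>" unfolding GRM_punct_def by blast
    have qw1: "qweight q 1 = 1" using q2 by (simp add: qweight_def)
    have "\<forall>s. s < q ^ m - 1 \<and> qweight q s < m * (q - 1) - (m * (q - 1) - 2) \<longrightarrow>
         b * 0 ^ s + (\<Sum>i<q ^ m - 1. a i * \<alpha> ^ (i * s)) = 0"
      using b unfolding GRM_def by blast
    moreover have "1 < q ^ m - 1 \<and> qweight q 1 < m * (q - 1) - (m * (q - 1) - 2)"
      using n2 qw1 diff2 n_def by simp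
    ultimately have "b * 0 ^ 1 + (\<Sum>i<q^m - 1. a i * \<alpha> ^ (i * 1)) = 0"
      by blast
    then show "a \<in> {a \<in> {0..<n} \<rightarrow>\<^sub>E F. (\<Sum>i<n. a i * \<alpha> ^ i) = 0}"
      using b n_def unfolding GRM_def by auto
  next
    fix a assume a: "a \<in> {a \<in> {0..<n} \<rightarrow>\<^sub>E F. (\<Sum>i<n. a i * \<alpha> ^ i) = 0}"
    define b where "b = - (\<Sum>i<n. a i)"
    have aF: "a i \<in> F" if "i < n" for i using a that by auto
    have bF: "b \<in> F" unfolding b_def using F_sub subfield_sum[OF F_sub, of "{..<n}" a] aF
      unfolding is_subfield_def by auto
    have A: "a \<in> {0..<q ^ m - 1} \<rightarrow>\<^sub>E F" using a n_def by simp
    have B: "\<forall>s. s < q ^ m - 1 \<and> qweight q s < m * (q - 1) - (m * (q - 1) - 2) \<longrightarrow>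
         b * 0 ^ s + (\<Sum>i<q ^ m - 1. a i * \<alpha> ^ (i * s)) = 0"
    proof (intro allI impI)
      fix s assume s: "s < q ^ m - 1 \<and> qweight q s < m * (q - 1) - (m * (q - 1) - 2)"
      show "b * 0 ^ s + (\<Sum>i<q ^ m - 1. a i * \<alpha> ^ (i * s)) = 0"
      proof (cases "s = 0")
        case True then show ?thesis by (simp add: b_def n_def)
      next
        case False
        then obtain j where j: "s = q ^ j" using qweight_one[OF q2, of s] s diff2 by auto
        have fr: "(sum f A) ^ (q ^ j) = sum (\<lambda>i. f i ^ (q ^ j)) A" for f :: "nat \<Rightarrow> 'k" and A :: "nat set"
          by (rule freshmans_dream_sum'[OF pr, of _ "e * j"]) (simp add: qchar power_mult)
        have "(\<Sum>i<n. a i * \<alpha> ^ (i * s)) = (\<Sum>i<n. (a i * \<alpha> ^ i) ^ (q ^ j))"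
          by (intro sum.cong refl)
             (simp add: power_mult_distrib subfield_pow_q[OF F_sub card_F] aF power_mult j)
        also have "\<dots> = (\<Sum>i<n. a i * \<alpha> ^ i) ^ (q ^ j)" by (rule fr[symmetric])
        also have "\<dots> = 0" using a q2 by simp
        finally show ?thesis using False n_def by simp
      qed
        qed
    have "(b, a) \<in> GRM F q m (m * (q - 1) - 2) \<alpha>"
      unfolding GRM_def mem_Collect_eq case_prod_conv using bF A B by blast
    then show "a \<in> GRM_punct F q m (m * (q - 1) - 2) \<alpha>" unfolding GRM_punct_def by blast
  qed
qed


lemma pow_cancel_cong:
  fixes r q k k' :: nat
  assumes "coprime q r" "[q ^ k = q ^ k'] (mod r)" "k \<le> k'"
  shows "[q ^ (k' - k) = 1] (mod r)"
proof -
  have "[q ^ k * 1 = q ^ k * q ^ (k' - k)] (mod r)"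
    using assms(2,3) by (simp add: power_add[symmetric])
  moreover have cp: "coprime (q ^ k) r" using assms(1) by simp
  ultimately have "[1 = q ^ (k' - k)] (mod r)"
    using iffD1[OF cong_mult_lcancel_nat[OF cp]] by blast
  then show ?thesis by (rule cong_sym)
qed

lemma nt_beta:
  fixes q r1 :: nat
  assumes cop: "coprime q r1"
  shows "inj_on (\<lambda>k. q ^ k mod r1) {..<ord r1 q}"
proof (rule inj_onI)
  fix k k' assume k: "k \<in> {..<ord r1 q}" and k': "k' \<in> {..<ord r1 q}" and eq: "q ^ k mod r1 = q ^ k' mod r1"
  show "k = k'"
  proof (rule ccontr)
    assume ne: "k \<noteq> k'"
    have "[q ^ k = q ^ k'] (mod r1)" using eq by (simp add: cong_def)
    then have c1: "[q ^ (k' - k) = 1] (mod r1)" if "k \<le> k'" using pow_cancel_cong[OF cop] that by blast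
    have c2: "[q ^ (k - k') = 1] (mod r1)" if "k' \<le> k"
      using pow_cancel_cong[OF cop, of k' k] that \<open>[q ^ k = q ^ k'] (mod r1)\<close> cong_sym by blast
    show False
    proof (cases "k \<le> k'")
      case True
      have "0 < k' - k" "k' - k < ord r1 q" using True ne k' by auto
      then show False using c1[OF True] ord_minimal[of "k' - k" r1 q] by blast
    next
      case False
      have "0 < k - k'" "k - k' < ord r1 q" using False ne k by auto
      then show False using c2 False ord_minimal[of "k - k'" r1 q] by auto
    qed
  qed
qed

lemma nt_gamma:
  fixes q r1 r2 m n :: nat
  assumes cop1: "coprime q r1" and cop2: "coprime q r2" and cop: "coprime r1 r2"
    and n: "n = r1 * r2" and qm: "q ^ m = n + 1" and q2: "q \<ge> 2" and n2: "n \<ge> 2"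
    and adv: "ord r1 q * d = m"
  shows "inj_on (\<lambda>k. (q ^ ord r1 q) ^ k mod r2) {..<d}"
proof -
  define a where "a = ord r1 q"
  have no: False if t: "0 < t" "t < m" "[q ^ t = 1] (mod r2)" "ord r1 q dvd t" for t
  proof -
    have "[q ^ t = 1] (mod r1)" using ord_divides t(4) by blast
    then have "[q ^ t = 1] (mod n)" using coprime_cong_mult_nat[OF _ t(3) cop] n by simp
    then have mod1: "q ^ t mod n = 1" using n2 by (simp add: cong_def)
    have "q ^ t * 2 \<le> q ^ t * q" using q2 by simp
    also have "q ^ t * q = q ^ Suc t" by simp
    also have "\<dots> \<le> q ^ m" using t q2 by (intro power_increasing) auto
    finally have "q ^ t * 2 \<le> n + 1" using qm by simp
    then have "q ^ t < n" using n2 by linarith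
    moreover have "q ^ 1 \<le> q ^ t" using q2 t(1) by (intro power_increasing) auto
    then have "q ^ t \<ge> 2" using q2 by simp
    moreover have "q ^ t mod n = q ^ t" using \<open>q ^ t < n\<close> by (rule mod_less)
    ultimately show False using mod1 by linarith
  qed
  show ?thesis
  proof (rule inj_onI)
    fix k k' assume k: "k \<in> {..<d}" and k': "k' \<in> {..<d}"
      and eq: "(q ^ ord r1 q) ^ k mod r2 = (q ^ ord r1 q) ^ k' mod r2"
    have eq': "[q ^ (a * k) = q ^ (a * k')] (mod r2)" using eq by (simp add: cong_def a_def power_mult)
    show "k = k'"
    proof (rule ccontr)
      assume ne: "k \<noteq> k'"
      have gen: False if "k1 < k2" "k2 < d" "[q ^ (a * k1) = q ^ (a * k2)] (mod r2)" for k1 k2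
      proof -
        have c: "[q ^ (a * k2 - a * k1) = 1] (mod r2)"
          using pow_cancel_cong[OF cop2 that(3)] that(1) by simp
        have "a * k2 - a * k1 = a * (k2 - k1)" by (simp add: diff_mult_distrib2)
        have "m > 0" using qm n2 by (cases m) auto
        then have "a > 0" using adv unfolding a_def by (cases "ord r1 q") auto
        define t where "t = a * (k2 - k1)"
        have t0: "0 < t" unfolding t_def using \<open>a > 0\<close> that(1) by simp
        have "k2 - k1 < d" using that by linarith
        have tm: "t < m"
        proof -
          have "a * (k2 - k1) < a * d" using \<open>a > 0\<close> \<open>k2 - k1 < d\<close> by simp
          then show ?thesis unfolding t_def using adv a_def by simp
        qed
        have td: "ord r1 q dvd t" unfolding t_def a_def by simp
        have ct: "[q ^ t = 1] (mod r2)" using c \<open>a * k2 - a * k1 = a * (k2 - k1)\<close> t_def by simp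
        show False by (rule no[OF t0 tm ct td])
      qed
      show False
      proof (cases "k < k'")
        case True then show False using gen[OF True] k' eq' by auto
      next
        case False then have "k' < k" using ne by simp
        then show False using gen[of k' k] k eq' cong_sym by blast
      qed
    qed
  qed
qed


lemma info_from_basis:
  fixes F :: "'k::{finite,field} set" and \<alpha> :: 'k and J :: "nat set" and C :: "(nat \<Rightarrow> 'k) set"
  assumes F_sub: "is_subfield F" and card_F: "card F = q" and q2: "q \<ge> 2"
    and card_k: "card (UNIV :: 'k set) = q ^ m"
    and J_sub: "J \<subseteq> {0..<n}" and cardJ: "card J = m"
    and indep: "\<And>c. (\<forall>j\<in>J. c j \<in> F) \<Longrightarrow> (\<Sum>j\<in>J. c j * \<alpha> ^ j) = 0 \<Longrightarrow> \<forall>j\<in>J. c j = 0"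
    and C_eq: "C = {w \<in> {0..<n} \<rightarrow>\<^sub>E F. (\<Sum>i<n. w i * \<alpha> ^ i) = 0}"
  shows "check_positions F {0..<n} C J"
proof -
  have finF: "finite F" by simp
  have finJ: "finite J" using J_sub finite_subset by blast
  define L where "L c = (\<Sum>j\<in>J. c j * \<alpha> ^ j)" for c :: "nat \<Rightarrow> 'k"
  have L_inj: "inj_on L (J \<rightarrow>\<^sub>E F)"
  proof (rule inj_onI)
    fix c c' assume c: "c \<in> J \<rightarrow>\<^sub>E F" and c': "c' \<in> J \<rightarrow>\<^sub>E F" and eq: "L c = L c'"
    have "(\<Sum>j\<in>J. (c j - c' j) * \<alpha> ^ j) = L c - L c'"
      unfolding L_def by (simp add: sum_subtractf left_diff_distrib)
    also have "\<dots> = 0" using eq by simp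
    finally have "\<forall>j\<in>J. c j - c' j = 0"
      using indep[of "\<lambda>j. c j - c' j"] subfield_diff[OF F_sub] c c' by (auto simp: PiE_iff)
    then show "c = c'" using PiE_ext[OF c c'] by simp
  qed
  have card_PJ: "card (J \<rightarrow>\<^sub>E F) = q ^ m"
    using card_PiE[OF finJ, of "\<lambda>_. F"] card_F cardJ by simp
  have L_surj: "L ` (J \<rightarrow>\<^sub>E F) = UNIV"
    by (rule card_subset_eq) (use card_image[OF L_inj] card_PJ card_k in auto)
  define I where "I = {0..<n} - J"
  have finI: "finite I" unfolding I_def by simp
  have IJ: "{..<n} = I \<union> J" "I \<inter> J = {}" unfolding I_def using J_sub by auto
  have split: "(\<Sum>i<n. f i) = (\<Sum>i\<in>I. f i) + (\<Sum>i\<in>J. f i)" for f :: "nat \<Rightarrow> 'k"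
    unfolding IJ(1) by (rule sum.union_disjoint[OF finI finJ IJ(2)])
  have restr_inj: "inj_on (\<lambda>w. restrict w I) C"
  proof (rule inj_onI)
    fix w w' assume w: "w \<in> C" and w': "w' \<in> C" and eq: "restrict w I = restrict w' I"
    have wP: "w \<in> {0..<n} \<rightarrow>\<^sub>E F" and wP': "w' \<in> {0..<n} \<rightarrow>\<^sub>E F" using w w' C_eq by auto
    have eqI: "w i = w' i" if "i \<in> I" for i using eq that by (metis restrict_apply')
    have "(\<Sum>i<n. (w i - w' i) * \<alpha> ^ i) = (\<Sum>i<n. w i * \<alpha> ^ i) - (\<Sum>i<n. w' i * \<alpha> ^ i)"
      by (simp add: sum_subtractf left_diff_distrib)
    also have "\<dots> = 0" using w w' C_eq by simp
    finally have "(\<Sum>i\<in>I. (w i - w' i) * \<alpha> ^ i) + (\<Sum>j\<in>J. (w j - w' j) * \<alpha> ^ j) = 0"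
      using split by simp
    moreover have "(\<Sum>i\<in>I. (w i - w' i) * \<alpha> ^ i) = 0" using eqI by simp
    ultimately have "(\<Sum>j\<in>J. (w j - w' j) * \<alpha> ^ j) = 0" by simp
    moreover have "\<forall>j\<in>J. w j - w' j \<in> F"
      using wP wP' J_sub subfield_diff[OF F_sub] by (auto simp: PiE_iff)
    ultimately have "\<forall>j\<in>J. w j - w' j = 0" using indep[of "\<lambda>j. w j - w' j"] by blast
    then have "w i = w' i" if "i \<in> {0..<n}" for i
      using eqI that IJ(1) by (cases "i \<in> I") auto
    then show "w = w'" using PiE_ext[OF wP wP'] by blast
  qed
  have restr_img: "(\<lambda>w. restrict w I) ` C = (I \<rightarrow>\<^sub>E F)"
  proof (intro equalityI subsetI)
    fix x assume "x \<in> (\<lambda>w. restrict w I) ` C"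
    then obtain w where w: "w \<in> C" and x: "x = restrict w I" by blast
    have "w \<in> {0..<n} \<rightarrow>\<^sub>E F" using w C_eq by auto
    then show "x \<in> I \<rightarrow>\<^sub>E F" unfolding x I_def by (auto simp: PiE_iff)
  next
    fix f assume f: "f \<in> I \<rightarrow>\<^sub>E F"
    define z where "z = - (\<Sum>i\<in>I. f i * \<alpha> ^ i)"
    have "z \<in> L ` (J \<rightarrow>\<^sub>E F)" using L_surj by simp
    then obtain c where c: "c \<in> J \<rightarrow>\<^sub>E F" and Lc: "L c = z" by blast
    define w where "w i = (if i \<in> I then f i else if i \<in> J then c i else undefined)" for i
    have wP: "w \<in> {0..<n} \<rightarrow>\<^sub>E F"
      using f c IJ(1) unfolding w_def by (auto simp: PiE_iff extensional_def I_def)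
    have "(\<Sum>i<n. w i * \<alpha> ^ i) = (\<Sum>i\<in>I. w i * \<alpha> ^ i) + (\<Sum>i\<in>J. w i * \<alpha> ^ i)" by (rule split)
    also have "(\<Sum>i\<in>I. w i * \<alpha> ^ i) = (\<Sum>i\<in>I. f i * \<alpha> ^ i)" unfolding w_def by simp
    also have "(\<Sum>i\<in>J. w i * \<alpha> ^ i) = L c" unfolding w_def L_def using IJ(2)
      by (intro sum.cong refl) auto
    finally have "(\<Sum>i<n. w i * \<alpha> ^ i) = 0" using Lc z_def by simp
    then have wC: "w \<in> C" using wP C_eq by simp
    have "restrict w I = f"
    proof
      fix i show "restrict w I i = f i"
        using f unfolding w_def by (cases "i \<in> I") (auto simp: PiE_iff extensional_def)
    qed
    then show "f \<in> (\<lambda>w. restrict w I) ` C" using wC by force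
  qed
  have cardI: "card I = n - m" unfolding I_def using card_Diff_subset[OF finJ J_sub] cardJ by simp
  have cardC: "card C = card F ^ (n - m)"
    using card_image[OF restr_inj] restr_img card_PiE[OF finI, of "\<lambda>_. F"] cardI by simp
  have dim: "code_dim F C = n - m"
    unfolding code_dim_def
  proof (rule the_equality)
    show "card C = card F ^ (n - m)" by (rule cardC)
    fix k assume "card C = card F ^ k"
    then show "k = n - m" using cardC card_F q2 by simp
  qed
  show ?thesis
    unfolding check_positions_def information_set_def
    using J_sub dim cardI restr_img I_def by auto
qed


lemma double_mod_zero:
  fixes x r :: nat
  assumes "x < r" "x = (x + x) mod r"
  shows "x = 0"
proof (cases "x + x < r")
  case True then show ?thesis using assms by simp
next
  case False
  then have "(x + x) mod r = x + x - r" using assms(1) by (simp add: mod_if)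
  then show ?thesis using assms by simp
qed

theorem mainTheorem1:
  fixes q m n r1 r2 :: nat
    and F :: "'k::{finite,field} set"
    and \<alpha> :: 'k
    and T :: "nat \<Rightarrow> nat \<times> nat"
  assumes q_pp: "\<exists>p e. prime p \<and> e > 0 \<and> q = p ^ e"
    and q_ge: "q \<ge> 2"
    and m_ge: "m \<ge> 1"
    and card_k: "card (UNIV :: 'k set) = q ^ m"
    and F_sub: "is_subfield F"
    and card_F: "card F = q"
    and n_def: "n = q ^ m - 1"
    and n_fact: "n = r1 * r2"
    and r1_gt: "r1 > 1" and r2_gt: "r2 > 1"
    and cop: "coprime r1 r2"
    and gen: "\<alpha> \<noteq> 0 \<and> (\<forall>x::'k. x \<noteq> 0 \<longrightarrow> (\<exists>i. x = \<alpha> ^ i))"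
    and T_bij: "bij_betw T {0..<n} ({0..<r1} \<times> {0..<r2})"
    and T_hom: "\<forall>i<n. \<forall>j<n. T ((i + j) mod n) =
                  ((fst (T i) + fst (T j)) mod r1, (snd (T i) + snd (T j)) mod r2)"
  shows "ord r1 q dvd m \<and>
         check_positions F {0..<n} (GRM_punct F q m (m * (q - 1) - 2) \<alpha>)
           {i \<in> {0..<n}. T i \<in> {(i1, i2) \<in> {0..<r1} \<times> {0..<r2}.
                                  i1 < ord r1 q \<and> i2 < m div ord r1 q}}"
proof -
  obtain p e where pe: "prime p" "e > 0" "q = p ^ e" using q_pp by blast
  have "r1 * r2 \<ge> 2 * 2" using r1_gt r2_gt by (intro mult_le_mono) auto
  then have n4: "n \<ge> 4" using n_fact by simp
  have qm1: "q ^ m \<ge> 1" using q_ge by simp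
  have qm: "q ^ m = n + 1" using n_def qm1 by simp
  have n2: "n \<ge> 2" using n4 by simp
  have charp: "CHAR('k) = p"
    by (rule char_facts[OF pe(1), of "e * m"]) (use card_k pe m_ge in \<open>auto simp: power_mult\<close>)
  have prC: "prime CHAR('k)" using charp pe(1) by simp
  have qC: "q = CHAR('k) ^ e" using charp pe by simp
  have "q ^ m = r2 * r1 + 1" using qm n_fact by (simp add: mult.commute)
  then have cong_r1: "[q ^ m = 1] (mod r1)" unfolding cong_def by (simp only: mod_mult_self3)
  have "q ^ m = r1 * r2 + 1" using qm n_fact by simp
  then have cong_r2: "[q ^ m = 1] (mod r2)" unfolding cong_def by (simp only: mod_mult_self3)
  have adv: "ord r1 q dvd m" using cong_r1 ord_divides by blast
  have adv2: "ord r2 q dvd m" using cong_r2 ord_divides by blast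
  define a where "a = ord r1 q"
  have m_pos: "m > 0" using m_ge by simp
  have a_pos: "a > 0" using adv m_pos unfolding a_def by (cases "ord r1 q") auto
  have cop1: "coprime q r1" using a_pos ord_eq_0[of r1 q] unfolding a_def by (simp add: coprime_commute)
  have cop2: "coprime q r2" using adv2 m_pos ord_eq_0[of r2 q]
    by (cases "ord r2 q") (auto simp: coprime_commute)
  define d where "d = m div a"
  have ad: "a * d = m" using adv a_def d_def by simp
  have d_pos: "d > 0" using ad m_pos by (cases d) auto
  have aq: "[q ^ a = 1] (mod r1)" using ord_works a_def by blast
  have inj1: "inj_on (\<lambda>k. q ^ k mod r1) {..<a}" using nt_beta[OF cop1] a_def by simp
  have inj2: "inj_on (\<lambda>k. (q ^ a) ^ k mod r2) {..<d}"
    using nt_gamma[OF cop1 cop2 cop n_fact qm q_ge n2, of d] ad a_def by simp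
  have "(\<lambda>k. q ^ k mod r1) ` {..<a} \<subseteq> {..<r1}" using r1_gt by auto
  then have a_le: "a \<le> r1"
    using card_inj_on_le[OF inj1, of "{..<r1}"] by simp
  have "(\<lambda>k. (q ^ a) ^ k mod r2) ` {..<d} \<subseteq> {..<r2}" using r2_gt by auto
  then have d_le: "d \<le> r2"
    using card_inj_on_le[OF inj2, of "{..<r2}"] by simp
  have mq2: "m * (q - 1) \<ge> 2"
  proof (rule ccontr)
    assume A: "\<not> m * (q - 1) \<ge> 2"
    show False
    proof (cases "m \<ge> 2")
      case True
      then have "m * (q - 1) \<ge> 2 * 1" using q_ge by (intro mult_le_mono) auto
      then show False using A by simp
    next
      case False
      then have "m = 1" using m_ge by simp
      then have "q = n + 1" using qm by simp
      then show False using A \<open>m = 1\<close> n4 by simp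
    qed
  qed
  have alpha_nz: "\<alpha> \<noteq> 0" using gen by blast
  have "\<alpha> ^ card (UNIV :: 'k set) = \<alpha>" by (rule pow_card_closed) auto
  then have "\<alpha> * \<alpha> ^ n = \<alpha> * 1" using card_k qm by simp
  then have alpha_n: "\<alpha> ^ n = 1" using alpha_nz by (metis mult_left_cancel)
  have alpha_mod: "\<alpha> ^ u = \<alpha> ^ (u mod n)" for u
  proof -
    have "\<alpha> ^ u = \<alpha> ^ (n * (u div n) + u mod n)" by (simp only: mult_div_mod_eq)
    also have "\<dots> = \<alpha> ^ (u mod n)" by (simp only: power_add power_mult alpha_n power_one mult_1)
    finally show ?thesis .
  qed
  have alpha_inj: "inj_on (\<lambda>i. \<alpha> ^ i) {..<n}"
  proof (rule eq_card_imp_inj_on)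
    show "finite {..<n}" by simp
    have sub: "UNIV - {0} \<subseteq> (\<lambda>i. \<alpha> ^ i) ` {..<n}"
    proof
      fix x :: 'k assume "x \<in> UNIV - {0}"
      then obtain i where "x = \<alpha> ^ i" using gen by blast
      then have "x = \<alpha> ^ (i mod n)" using alpha_mod by simp
      moreover have "i mod n < n" using n2 by simp
      ultimately show "x \<in> (\<lambda>i. \<alpha> ^ i) ` {..<n}" by blast
    qed
    have "card (UNIV - {0 :: 'k}) = n" using card_k qm by (simp add: card_Diff_singleton)
    then have "n \<le> card ((\<lambda>i. \<alpha> ^ i) ` {..<n})" using card_mono[OF _ sub] by simp
    moreover have "card ((\<lambda>i. \<alpha> ^ i) ` {..<n}) \<le> n" using card_image_le[of "{..<n}"] by simp
    ultimately show "card ((\<lambda>i. \<alpha> ^ i) ` {..<n}) = card {..<n}" by simp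
  qed
  have alpha_eq: "\<alpha> ^ u = \<alpha> ^ v \<longleftrightarrow> u mod n = v mod n" for u v
  proof
    assume "\<alpha> ^ u = \<alpha> ^ v"
    then have "\<alpha> ^ (u mod n) = \<alpha> ^ (v mod n)" using alpha_mod by metis
    moreover have "u mod n \<in> {..<n}" "v mod n \<in> {..<n}" using n2 by auto
    ultimately show "u mod n = v mod n" using alpha_inj by (simp add: inj_on_def)
  next
    assume "u mod n = v mod n"
    then show "\<alpha> ^ u = \<alpha> ^ v" using alpha_mod by metis
  qed
  have T_img: "T ` {0..<n} = {0..<r1} \<times> {0..<r2}" using T_bij by (simp add: bij_betw_def)
  have T_inj: "inj_on T {0..<n}" using T_bij by (simp add: bij_betw_def)
  have T_in: "fst (T i) < r1 \<and> snd (T i) < r2" if "i < n" for i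
  proof -
    have "T i \<in> T ` {0..<n}" using that by simp
    then have "T i \<in> {0..<r1} \<times> {0..<r2}" by (simp only: T_img)
    then show ?thesis by (auto simp: mem_Times_iff)
  qed
  have T0: "T 0 = (0, 0)"
  proof -
    have "0 < n" using n2 by simp
    then have "T ((0 + 0) mod n) = ((fst (T 0) + fst (T 0)) mod r1, (snd (T 0) + snd (T 0)) mod r2)"
      using T_hom by blast
    then have h: "T 0 = ((fst (T 0) + fst (T 0)) mod r1, (snd (T 0) + snd (T 0)) mod r2)" by simp
    obtain x y where xy: "T 0 = (x, y)" by (cases "T 0")
    have "(x, y) = ((x + x) mod r1, (y + y) mod r2)" using h unfolding xy fst_conv snd_conv .
    then have ex: "x = (x + x) mod r1" and ey: "y = (y + y) mod r2" by (meson Pair_inject)+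
    have lt: "x < r1" "y < r2" using T_in[of 0] n2 unfolding xy by auto
    have "x = 0" by (rule double_mod_zero[OF lt(1) ex])
    moreover have "y = 0" by (rule double_mod_zero[OF lt(2) ey])
    ultimately show ?thesis using xy by simp
  qed
  define phi where "phi u = T (u mod n)" for u
  have phi_add: "phi (u + v) = ((fst (phi u) + fst (phi v)) mod r1, (snd (phi u) + snd (phi v)) mod r2)" for u v
  proof -
    have "phi (u + v) = T ((u mod n + v mod n) mod n)" unfolding phi_def by (simp add: mod_add_eq)
    also have "\<dots> = ((fst (phi u) + fst (phi v)) mod r1, (snd (phi u) + snd (phi v)) mod r2)"
      unfolding phi_def using T_hom n2 by simp
    finally show ?thesis .
  qed
  have alpha_phi: "\<alpha> ^ u = \<alpha> ^ v \<longleftrightarrow> phi u = phi v" for u v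
  proof -
    have "u mod n \<in> {0..<n}" "v mod n \<in> {0..<n}" using n2 by auto
    then have "T (u mod n) = T (v mod n) \<longleftrightarrow> u mod n = v mod n" using T_inj by (auto simp: inj_on_def)
    then show ?thesis using alpha_eq phi_def by simp
  qed
  have "(1::nat, 0::nat) \<in> T ` {0..<n}" using T_img r1_gt r2_gt by auto
  then obtain e1 where e1: "e1 < n" "T e1 = (1, 0)" by auto
  have "(0::nat, 1::nat) \<in> T ` {0..<n}" using T_img r1_gt r2_gt by auto
  then obtain e2 where e2: "e2 < n" "T e2 = (0, 1)" by auto
  have phi_k1: "phi (k * e1) = (k mod r1, 0)" for k
  proof (induction k)
    case 0 then show ?case using T0 by (simp add: phi_def)
  next
    case (Suc k)
    have "phi (Suc k * e1) = phi (e1 + k * e1)" by simp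
    also have "\<dots> = ((1 + k mod r1) mod r1, 0)" using phi_add[of e1 "k * e1"] Suc e1 by (simp add: phi_def)
    also have "\<dots> = (Suc k mod r1, 0)" by (simp add: mod_Suc_eq)
    finally show ?case .
  qed
  have phi_k2: "phi (k * e2) = (0, k mod r2)" for k
  proof (induction k)
    case 0 then show ?case using T0 by (simp add: phi_def)
  next
    case (Suc k)
    have "phi (Suc k * e2) = phi (e2 + k * e2)" by simp
    also have "\<dots> = (0, (1 + k mod r2) mod r2)" using phi_add[of e2 "k * e2"] Suc e2 by (simp add: phi_def)
    also have "\<dots> = (0, Suc k mod r2)" by (simp add: mod_Suc_eq)
    finally show ?case .
  qed
  have phi_lin: "phi (i1 * e1 + i2 * e2) = (i1 mod r1, i2 mod r2)" for i1 i2
    using phi_add[of "i1 * e1" "i2 * e2"] phi_k1 phi_k2 by simp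
  define \<beta> where "\<beta> = \<alpha> ^ e1"
  define \<gamma> where "\<gamma> = \<alpha> ^ e2"
  have bg: "\<beta> ^ i1 * \<gamma> ^ i2 = \<alpha> ^ (i1 * e1 + i2 * e2)" for i1 i2
    unfolding \<beta>_def \<gamma>_def by (simp add: power_add power_mult[symmetric] mult.commute)
  have beta_eq: "\<beta> ^ u = \<beta> ^ v \<longleftrightarrow> u mod r1 = v mod r1" for u v
    using bg[of u 0] bg[of v 0] alpha_phi phi_k1 by simp
  have gamma_eq: "\<gamma> ^ u = \<gamma> ^ v \<longleftrightarrow> u mod r2 = v mod r2" for u v
    using bg[of 0 u] bg[of 0 v] alpha_phi phi_k2 by simp
  define G where "G = {..<a} \<times> {..<d}"
  have G_eq: "{(i1, i2) \<in> {0..<r1} \<times> {0..<r2}. i1 < ord r1 q \<and> i2 < m div ord r1 q} = G"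
    unfolding G_def using a_le d_le a_def d_def by auto
  define J where "J = {i \<in> {0..<n}. T i \<in> G}"
  have J_eq: "{i \<in> {0..<n}. T i \<in> {(i1, i2) \<in> {0..<r1} \<times> {0..<r2}.
                  i1 < ord r1 q \<and> i2 < m div ord r1 q}} = J"
    unfolding J_def G_eq ..
  have J_sub: "J \<subseteq> {0..<n}" unfolding J_def by auto
  have G_sub: "G \<subseteq> {0..<r1} \<times> {0..<r2}" unfolding G_def using a_le d_le by auto
  have TJ: "T ` J = G"
  proof (intro equalityI subsetI)
    fix x assume "x \<in> T ` J" then show "x \<in> G" unfolding J_def by auto
  next
    fix x assume x: "x \<in> G"
    then have "x \<in> T ` {0..<n}" using G_sub T_img by auto
    then obtain i where "i \<in> {0..<n}" "x = T i" by auto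
    then show "x \<in> T ` J" using x unfolding J_def by auto
  qed
  have bijJ: "bij_betw T J G" by (rule bij_betw_subset[OF T_bij J_sub TJ])
  have cardJ: "card J = m" using bij_betw_same_card[OF bijJ] ad unfolding G_def by simp
  have alphaJ: "\<alpha> ^ i = \<beta> ^ fst (T i) * \<gamma> ^ snd (T i)" if "i \<in> J" for i
  proof -
    have i: "i < n" using that J_sub by auto
    have "phi (fst (T i) * e1 + snd (T i) * e2) = (fst (T i) mod r1, snd (T i) mod r2)" by (rule phi_lin)
    also have "\<dots> = T i" using T_in[OF i] by simp
    also have "\<dots> = phi i" unfolding phi_def using i by simp
    finally have "\<alpha> ^ (fst (T i) * e1 + snd (T i) * e2) = \<alpha> ^ i" using alpha_phi by blast
    then show ?thesis using bg by simp
  qed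
  have frobQ: "(sum f A) ^ (q ^ t) = sum (\<lambda>i. f i ^ (q ^ t)) A" for t and f :: "nat \<Rightarrow> 'k" and A
    by (rule freshmans_dream_sum'[OF prC, of _ "e * t"]) (simp add: qC power_mult)
  have frob1: "(sum f A) ^ q = sum (\<lambda>i. f i ^ q) A" for f :: "nat \<Rightarrow> 'k" and A
    using frobQ[where t=1] by simp
  have Fq: "x ^ (q ^ j) = x" if "x \<in> F" for x j using subfield_pow_q[OF F_sub card_F that] .
  have injb: "inj_on (\<lambda>k. \<beta> ^ (q ^ k)) {..<a}"
    using inj1 beta_eq by (simp add: inj_on_def)
  have injg: "inj_on (\<lambda>k. \<gamma> ^ ((q ^ a) ^ k)) {..<d}"
    using inj2 gamma_eq by (simp add: inj_on_def)
  have beta_qa: "\<beta> ^ (q ^ a) = \<beta>"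
  proof -
    have "q ^ a mod r1 = 1 mod r1" using aq by (simp add: cong_def)
    then have "\<beta> ^ (q ^ a) = \<beta> ^ 1" using beta_eq by blast
    then show ?thesis by simp
  qed
  have indepG: "\<forall>x\<in>G. c x = 0"
    if cF: "\<forall>x\<in>G. c x \<in> F" and eq: "(\<Sum>x\<in>G. c x * (\<beta> ^ fst x * \<gamma> ^ snd x)) = 0" for c
  proof -
    define C where "C i2 = (\<Sum>i1<a. c (i1, i2) * \<beta> ^ i1)" for i2
    have "(\<Sum>x\<in>G. c x * (\<beta> ^ fst x * \<gamma> ^ snd x)) = (\<Sum>i1<a. \<Sum>i2<d. c (i1, i2) * (\<beta> ^ i1 * \<gamma> ^ i2))"
      unfolding G_def by (simp add: sum.cartesian_product split_beta)
    also have "\<dots> = (\<Sum>i2<d. \<Sum>i1<a. c (i1, i2) * (\<beta> ^ i1 * \<gamma> ^ i2))" by (rule sum.swap)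
    also have "\<dots> = (\<Sum>i2<d. C i2 * \<gamma> ^ i2)"
      unfolding C_def by (simp add: sum_distrib_right mult.assoc)
    finally have eqC: "(\<Sum>i2<d. C i2 * \<gamma> ^ i2) = 0" using eq by simp
    have Cfix: "C i2 ^ (q ^ a) = C i2" if "i2 < d" for i2
    proof -
      have "C i2 ^ (q ^ a) = (\<Sum>i1<a. (c (i1, i2) * \<beta> ^ i1) ^ (q ^ a))" unfolding C_def by (rule frobQ)
      also have "\<dots> = C i2" unfolding C_def
      proof (intro sum.cong refl)
        fix i1 assume "i1 \<in> {..<a}"
        then have "c (i1, i2) \<in> F" using cF that unfolding G_def by auto
        then have "c (i1, i2) ^ (q ^ a) = c (i1, i2)" by (rule Fq)
        moreover have "(\<beta> ^ i1) ^ (q ^ a) = \<beta> ^ i1"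
          by (metis beta_qa power_mult mult.commute)
        ultimately show "(c (i1, i2) * \<beta> ^ i1) ^ (q ^ a) = c (i1, i2) * \<beta> ^ i1"
          by (simp add: power_mult_distrib)
      qed
      finally show ?thesis .
    qed
    have C0: "\<forall>i2<d. C i2 = 0"
      by (rule indep_poly[OF frobQ[where t=a] Cfix injg eqC])
    show ?thesis
    proof
      fix x assume x: "x \<in> G"
      obtain i1 i2 where x12: "x = (i1, i2)" "i1 < a" "i2 < d" using x unfolding G_def by auto
      have s0: "(\<Sum>j<a. c (j, i2) * \<beta> ^ j) = 0" using C0 x12 unfolding C_def by simp
      have cq: "c (j, i2) ^ q = c (j, i2)" if "j < a" for j
      proof -
        have "(j, i2) \<in> G" using that x12 unfolding G_def by auto
        then have "c (j, i2) \<in> F" using cF by blast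
        then show ?thesis using Fq[of "c (j, i2)" 1] by simp
      qed
      have injb': "inj_on (\<lambda>k. \<beta> ^ (q ^ k)) {..<a}" by (rule injb)
      have "\<forall>j<a. c (j, i2) = 0"
        by (rule indep_poly[where c = "\<lambda>j. c (j, i2)", OF frob1 cq injb' s0])
      then show "c x = 0" using x12 by simp
    qed
  qed
  have indepJ: "\<forall>j\<in>J. c j = 0"
    if cF: "\<forall>j\<in>J. c j \<in> F" and eq: "(\<Sum>j\<in>J. c j * \<alpha> ^ j) = 0" for c
  proof -
    have injT: "inj_on T J" using bijJ by (simp add: bij_betw_def)
    define c' where "c' x = c (the_inv_into J T x)" for x
    have inv: "the_inv_into J T (T j) = j" if "j \<in> J" for j by (rule the_inv_into_f_f[OF injT that])
    have "(\<Sum>x\<in>G. c' x * (\<beta> ^ fst x * \<gamma> ^ snd x)) = (\<Sum>j\<in>J. c' (T j) * (\<beta> ^ fst (T j) * \<gamma> ^ snd (T j)))"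
      using sum.reindex_bij_betw[OF bijJ, of "\<lambda>x. c' x * (\<beta> ^ fst x * \<gamma> ^ snd x)"] by simp
    also have "\<dots> = (\<Sum>j\<in>J. c j * \<alpha> ^ j)"
      by (intro sum.cong refl) (simp add: c'_def inv alphaJ)
    finally have eq': "(\<Sum>x\<in>G. c' x * (\<beta> ^ fst x * \<gamma> ^ snd x)) = 0" using eq by simp
    have cF': "\<forall>x\<in>G. c' x \<in> F"
    proof
      fix x assume "x \<in> G"
      then have "the_inv_into J T x \<in> J" using the_inv_into_into[OF injT] TJ by blast
      then show "c' x \<in> F" using cF c'_def by simp
    qed
    have "\<forall>x\<in>G. c' x = 0" by (rule indepG[OF cF' eq'])
    then show ?thesis using TJ c'_def inv by auto
  qed
  have C_eq: "GRM_punct F q m (m * (q - 1) - 2) \<alpha> = {w \<in> {0..<n} \<rightarrow>\<^sub>E F. (\<Sum>i<n. w i * \<alpha> ^ i) = 0}"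
    by (rule code_char[OF F_sub card_F q_ge qC prC mq2 n_def n2])
  have "check_positions F {0..<n} (GRM_punct F q m (m * (q - 1) - 2) \<alpha>) J"
    by (rule info_from_basis[OF F_sub card_F q_ge card_k J_sub cardJ indepJ C_eq]) auto
  then show ?thesis using adv J_eq by simp
qed

end
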